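(* Let $L$ be a finite-dimensional Lie algebra over an algebraically closed field $F$ of any characteristic. Then $L$ has a maximal subalgebra $M$ that is abelian if and only if either (i) $L$ has an abelian ideal of codimension one in $L$; or (ii) $L^{(1)}$ has dimension one and $\phi(L)=0$. In either case, $L$ is completely solvable.
   Context: $L^{(1)}=[L,L]$. $L$ is completely solvable if $L^{(1)}$ is nilpotent. $\phi(L)$ is the Frattini ideal: the largest ideal of $L$ contained in the intersection of all maximal subalgebras of $L$. *)

theory Defs
  imports Main "HOL-Computational_Algebra.Polynomial"
begin

definition alg_closed_field :: "'a::field itself \<Rightarrow> bool" where
  "alg_closed_field _ \<longleftrightarrow> (\<forall>p :: 'a poly. degree p > 0 \<longrightarrow> (\<exists>x. poly p x = 0))"

definition lie_algebra :: "('a::field \<Rightarrow> 'v::ab_group_add \<Rightarrow> 'v) \<Rightarrow> ('v \<Rightarrow> 'v \<Rightarrow> 'v) \<Rightarrow> bool" where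
  "lie_algebra sc br \<longleftrightarrow> vector_space sc
     \<and> (\<forall>x. Vector_Spaces.linear sc sc (br x))
     \<and> (\<forall>y. Vector_Spaces.linear sc sc (\<lambda>x. br x y))
     \<and> (\<forall>x. br x x = 0)
     \<and> (\<forall>x y z. br x (br y z) + br y (br z x) + br z (br x y) = 0)"

definition fin_dim :: "('a::field \<Rightarrow> 'v::ab_group_add \<Rightarrow> 'v) \<Rightarrow> bool" where
  "fin_dim sc \<longleftrightarrow> (\<exists>B. finite B \<and> module.span sc B = UNIV)"

definition lie_subalgebra :: "('a::field \<Rightarrow> 'v::ab_group_add \<Rightarrow> 'v) \<Rightarrow> ('v \<Rightarrow> 'v \<Rightarrow> 'v) \<Rightarrow> 'v set \<Rightarrow> bool" where
  "lie_subalgebra sc br S \<longleftrightarrow> module.subspace sc S \<and> (\<forall>x\<in>S. \<forall>y\<in>S. br x y \<in> S)"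

definition lie_ideal :: "('a::field \<Rightarrow> 'v::ab_group_add \<Rightarrow> 'v) \<Rightarrow> ('v \<Rightarrow> 'v \<Rightarrow> 'v) \<Rightarrow> 'v set \<Rightarrow> bool" where
  "lie_ideal sc br I \<longleftrightarrow> module.subspace sc I \<and> (\<forall>x. \<forall>y\<in>I. br x y \<in> I)"

definition maximal_subalgebra :: "('a::field \<Rightarrow> 'v::ab_group_add \<Rightarrow> 'v) \<Rightarrow> ('v \<Rightarrow> 'v \<Rightarrow> 'v) \<Rightarrow> 'v set \<Rightarrow> bool" where
  "maximal_subalgebra sc br M \<longleftrightarrow> lie_subalgebra sc br M \<and> M \<noteq> UNIV
     \<and> (\<forall>N. lie_subalgebra sc br N \<and> M \<subseteq> N \<longrightarrow> N = M \<or> N = UNIV)"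

definition abelian_set :: "('v::ab_group_add \<Rightarrow> 'v \<Rightarrow> 'v) \<Rightarrow> 'v set \<Rightarrow> bool" where
  "abelian_set br S \<longleftrightarrow> (\<forall>x\<in>S. \<forall>y\<in>S. br x y = 0)"

definition derived_algebra :: "('a::field \<Rightarrow> 'v::ab_group_add \<Rightarrow> 'v) \<Rightarrow> ('v \<Rightarrow> 'v \<Rightarrow> 'v) \<Rightarrow> 'v set" where
  "derived_algebra sc br = module.span sc {br x y | x y. True}"

text \<open>Lower central series of a subalgebra K: K^1 = K, K^(n+1) = [K, K^n] (index shifted by one).\<close>
fun lower_central :: "('a::field \<Rightarrow> 'v::ab_group_add \<Rightarrow> 'v) \<Rightarrow> ('v \<Rightarrow> 'v \<Rightarrow> 'v) \<Rightarrow> 'v set \<Rightarrow> nat \<Rightarrow> 'v set" where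
  "lower_central sc br K 0 = K"
| "lower_central sc br K (Suc n) = module.span sc {br x y | x y. x \<in> K \<and> y \<in> lower_central sc br K n}"

definition nilpotent_subalg :: "('a::field \<Rightarrow> 'v::ab_group_add \<Rightarrow> 'v) \<Rightarrow> ('v \<Rightarrow> 'v \<Rightarrow> 'v) \<Rightarrow> 'v set \<Rightarrow> bool" where
  "nilpotent_subalg sc br K \<longleftrightarrow> (\<exists>n. lower_central sc br K n = {0})"

definition completely_solvable :: "('a::field \<Rightarrow> 'v::ab_group_add \<Rightarrow> 'v) \<Rightarrow> ('v \<Rightarrow> 'v \<Rightarrow> 'v) \<Rightarrow> bool" where
  "completely_solvable sc br \<longleftrightarrow> nilpotent_subalg sc br (derived_algebra sc br)"

text \<open>Frattini ideal: the largest ideal contained in the intersection of all maximal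
  subalgebras, realised as the span of all such ideals (a sum of ideals is an ideal).\<close>
definition frattini_ideal :: "('a::field \<Rightarrow> 'v::ab_group_add \<Rightarrow> 'v) \<Rightarrow> ('v \<Rightarrow> 'v \<Rightarrow> 'v) \<Rightarrow> 'v set" where
  "frattini_ideal sc br = module.span sc
     (\<Union>{I. lie_ideal sc br I \<and> I \<subseteq> \<Inter>{M. maximal_subalgebra sc br M}})"

end

theory Submission
  imports Defs
begin

locale lie_fd = finite_dimensional_vector_space scale Basis
  for scale :: "'a::field \<Rightarrow> 'v::ab_group_add \<Rightarrow> 'v" (infixr "*s" 75) and Basis :: "'v set" +
  fixes br :: "'v \<Rightarrow> 'v \<Rightarrow> 'v"
  assumes br_add_r: "br x (y + z) = br x y + br x z"
  and br_scale_r: "br x (c *s y) = c *s br x y"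
  and br_add_l: "br (x + y) z = br x z + br y z"
  and br_scale_l: "br (c *s x) y = c *s br x y"
  and br_alt: "br x x = 0"
  and br_jac: "br x (br y z) + br y (br z x) + br z (br x y) = 0"
  and alg_closed: "\<forall>p :: 'a poly. degree p > 0 \<longrightarrow> (\<exists>x. poly p x = 0)"
begin

lemma br_0_r[simp]: "br x 0 = 0"
  using br_add_r[of x 0 0] by simp
lemma br_0_l[simp]: "br 0 x = 0"
  using br_add_l[of 0 0 x] by simp
lemma br_neg_r: "br x (- y) = - br x y"
  using br_add_r[of x y "-y"] by (metis add.commute add_right_cancel br_0_r eq_neg_iff_add_eq_0 right_minus)
lemma br_neg_l: "br (- x) y = - br x y"
  using br_add_l[of x "-x" y] by (metis add.commute add_right_cancel br_0_l eq_neg_iff_add_eq_0 right_minus)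
lemma br_diff_r: "br x (y - z) = br x y - br x z"
  using br_add_r[of x y "-z"] br_neg_r by simp
lemma br_diff_l: "br (x - y) z = br x z - br y z"
  using br_add_l[of x "-y" z] br_neg_l by simp
lemma br_anti: "br y x = - br x y"
proof -
  have "br (x+y) (x+y) = br x x + br x y + (br y x + br y y)"
    by (simp add: br_add_l br_add_r add.assoc)
  then have "br x y + br y x = 0" by (simp add: br_alt)
  then show ?thesis by (simp add: eq_neg_iff_add_eq_0 add.commute)
qed
lemma br_deriv: "br a (br b c) = br (br a b) c + br b (br a c)"
proof -
  have "br a (br b c) + br b (br c a) + br c (br a b) = 0" by (rule br_jac)
  moreover have "br b (br c a) = - br b (br a c)" by (metis br_anti br_neg_r)
  moreover have "br c (br a b) = - br (br a b) c" by (rule br_anti)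
  ultimately show ?thesis by (simp add: algebra_simps eq_neg_iff_add_eq_0)
qed

lemma br_expand: "br (k *s x + m) (l *s x + n) = k *s br x n + l *s br m x + br m n"
  by (simp add: br_add_l br_add_r br_scale_l br_scale_r br_alt algebra_simps)

definition lin :: "('v \<Rightarrow> 'v) \<Rightarrow> bool" where
  "lin T \<longleftrightarrow> (\<forall>x y. T (x + y) = T x + T y) \<and> (\<forall>c x. T (c *s x) = c *s T x)"

lemma lin_0: "lin T \<Longrightarrow> T 0 = 0"
  unfolding lin_def by (metis add_cancel_right_right)

definition polyop :: "('v \<Rightarrow> 'v) \<Rightarrow> 'a poly \<Rightarrow> 'v \<Rightarrow> 'v" where
  "polyop T p v = fold_coeffs (\<lambda>a w. a *s v + T w) p 0"

lemma polyop_0[simp]: "polyop T 0 v = 0"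
  by (simp add: polyop_def)

lemma polyop_pCons: "lin T \<Longrightarrow> polyop T (pCons a p) v = a *s v + T (polyop T p v)"
  by (cases "p = 0 \<and> a = 0") (auto simp: polyop_def lin_0)

lemma polyop_add: "lin T \<Longrightarrow> polyop T (p + q) v = polyop T p v + polyop T q v"
proof (induction p q rule: poly_induct2)
  case 0 then show ?case by simp
next
  case (pCons a p b q)
  then show ?case by (simp add: polyop_pCons lin_def scale_left_distrib algebra_simps)
qed

lemma polyop_smult: "lin T \<Longrightarrow> polyop T (smult c p) v = c *s polyop T p v"
  by (induction p) (simp_all add: polyop_pCons lin_def scale_right_distrib)

lemma polyop_v_add: "lin T \<Longrightarrow> polyop T p (u + w) = polyop T p u + polyop T p w"
  by (induction p) (simp_all add: polyop_pCons lin_def scale_right_distrib algebra_simps)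

lemma polyop_v_scale: "lin T \<Longrightarrow> polyop T p (c *s u) = c *s polyop T p u"
  by (induction p) (simp_all add: polyop_pCons lin_def scale_right_distrib mult.commute)

lemma polyop_mult: "lin T \<Longrightarrow> polyop T (p * q) v = polyop T p (polyop T q v)"
  by (induction p) (simp_all add: polyop_pCons polyop_add polyop_smult)

lemma polyop_monom: "lin T \<Longrightarrow> polyop T (monom c n) v = c *s (T ^^ n) v"
proof (induction n)
  case 0
  have "monom c 0 = pCons c 0" by (simp add: monom_0)
  then show ?case using 0 by (simp add: polyop_pCons lin_0)
next
  case (Suc n)
  then show ?case by (simp add: monom_Suc polyop_pCons lin_def)
qed

lemma polyop_lin_factor: "lin T \<Longrightarrow> polyop T [:-c, 1:] w = T w - c *s w"
  by (simp add: polyop_pCons lin_0)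

lemma polyop_in: "lin T \<Longrightarrow> subspace U \<Longrightarrow> (\<forall>x\<in>U. T x \<in> U) \<Longrightarrow> v \<in> U \<Longrightarrow> polyop T p v \<in> U"
  by (induction p) (simp_all add: polyop_pCons subspace_0 subspace_add subspace_scale)

lemma descent:
  assumes T: "lin T" and M: "subspace M" and U: "subspace U" and MU: "M \<subseteq> U"
    and TU: "\<forall>x\<in>U. T x \<in> U" and v: "v \<in> U" "v \<notin> M"
    and q: "q \<noteq> 0" "polyop T q v \<in> M"
  shows "\<exists>w\<in>U. w \<notin> M \<and> (\<exists>c. T w - c *s w \<in> M)"
  using q
proof (induction "degree q" arbitrary: q rule: less_induct)
  case less
  show ?case
  proof (cases "degree q = 0")
    case True
    then obtain a where qa: "q = [:a:]" by (metis degree_eq_zeroE)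
    with less have a: "a \<noteq> 0" by auto
    have "polyop T q v = a *s v" using qa T by (simp add: polyop_pCons lin_0)
    with less have "a *s v \<in> M" by simp
    then have "inverse a *s (a *s v) \<in> M" by (rule subspace_scale[OF M])
    then have "v \<in> M" using a by simp
    with v show ?thesis by simp
  next
    case False
    then obtain c where "poly q c = 0" using alg_closed by auto
    then obtain r where qr: "q = [:-c,1:] * r" using poly_eq_0_iff_dvd by (metis dvdE)
    have r0: "r \<noteq> 0" using less.prems qr by auto
    have "degree ([:-c,1:] * r) = degree [:-c,1:] + degree r" by (rule degree_mult_eq) (use r0 in simp_all)
    then have "degree q = 1 + degree r" using qr by simp
    then have dr: "degree r < degree q" by simp
    define w where "w = polyop T r v"
    have wU: "w \<in> U" unfolding w_def using polyop_in[OF T U TU v(1)] .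
    have "polyop T q v = T w - c *s w"
      unfolding qr w_def by (simp only: polyop_mult[OF T] polyop_lin_factor[OF T])
    show ?thesis
    proof (cases "w \<in> M")
      case True
      then show ?thesis using less.hyps[OF dr r0] w_def by simp
    next
      case False
      then show ?thesis using wU \<open>polyop T q v = T w - c *s w\<close> less.prems by metis
    qed
  qed
qed

lemma exists_annih:
  assumes T: "lin T" and M: "subspace M"
  shows "\<exists>q. q \<noteq> 0 \<and> polyop T q v \<in> M"
proof -
  define G where "G k = (\<lambda>i. (T ^^ i) v) ` {..<k}" for k
  have "\<exists>k. (T ^^ k) v \<in> span (M \<union> G k)"
  proof (rule ccontr)
    assume na: "\<not> ?thesis"
    have "dim (M \<union> G k) = dim M + k" for k
    proof (induction k)
      case 0 then show ?case by (simp add: G_def)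
    next
      case (Suc k)
      have "M \<union> G (Suc k) = insert ((T ^^ k) v) (M \<union> G k)"
        by (auto simp: G_def lessThan_Suc)
      then show ?case using Suc na by (simp add: dim_insert)
    qed
    from this[of "Suc dimension"] dim_subset_UNIV[of "M \<union> G (Suc dimension)"]
    show False by simp
  qed
  then obtain k where k: "(T ^^ k) v \<in> span (M \<union> G k)" by blast
  have rep: "\<exists>m p. m \<in> M \<and> coeff p k = 0 \<and> x = m + polyop T p v" if "x \<in> span (M \<union> G k)" for x
    using that
  proof (induction rule: span_induct)
    case base
    show ?case
    proof (rule subspaceI)
      show "0 \<in> Collect (\<lambda>x. \<exists>m p. m \<in> M \<and> coeff p k = 0 \<and> x = m + polyop T p v)"
        using M by (auto intro!: exI[of _ 0] simp: subspace_0)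
    next
      fix x y assume "x \<in> Collect (\<lambda>x. \<exists>m p. m \<in> M \<and> coeff p k = 0 \<and> x = m + polyop T p v)"
        "y \<in> Collect (\<lambda>x. \<exists>m p. m \<in> M \<and> coeff p k = 0 \<and> x = m + polyop T p v)"
      then obtain m1 p1 m2 p2 where "m1 \<in> M" "coeff p1 k = 0" "x = m1 + polyop T p1 v"
        "m2 \<in> M" "coeff p2 k = 0" "y = m2 + polyop T p2 v" by auto
      then show "x + y \<in> Collect (\<lambda>x. \<exists>m p. m \<in> M \<and> coeff p k = 0 \<and> x = m + polyop T p v)"
        using M by (auto intro!: exI[of _ "m1 + m2"] exI[of _ "p1 + p2"]
            simp: subspace_add polyop_add[OF T] algebra_simps)
    next
      fix c x assume "x \<in> Collect (\<lambda>x. \<exists>m p. m \<in> M \<and> coeff p k = 0 \<and> x = m + polyop T p v)"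
      then obtain m1 p1 where "m1 \<in> M" "coeff p1 k = 0" "x = m1 + polyop T p1 v" by auto
      then show "c *s x \<in> Collect (\<lambda>x. \<exists>m p. m \<in> M \<and> coeff p k = 0 \<and> x = m + polyop T p v)"
        using M by (auto intro!: exI[of _ "c *s m1"] exI[of _ "smult c p1"]
            simp: subspace_scale polyop_smult[OF T] scale_right_distrib)
    qed
  next
    case (step x)
    then show ?case
    proof
      assume "x \<in> M"
      moreover have "x = x + polyop T 0 v" by simp
      ultimately show ?thesis by (metis coeff_0)
    next
      assume "x \<in> G k"
      then obtain i where i: "i < k" "x = (T ^^ i) v" by (auto simp: G_def)
      then show ?thesis using M
        by (auto intro!: exI[of _ 0] exI[of _ "monom 1 i"] simp: subspace_0 polyop_monom[OF T] coeff_monom)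
    qed
  qed
  obtain m p where mp: "m \<in> M" "coeff p k = 0" "(T ^^ k) v = m + polyop T p v"
    using rep[OF k] by blast
  define q where "q = monom 1 k + smult (-1) p"
  have "coeff q k = 1" using mp by (simp add: q_def)
  then have "q \<noteq> 0" by auto
  moreover have "polyop T q v = m"
  proof -
    have "polyop T q v = polyop T (monom 1 k) v + polyop T (smult (-1) p) v"
      unfolding q_def by (rule polyop_add[OF T])
    also have "\<dots> = (T^^k) v - polyop T p v"
      using polyop_smult[OF T, of "-1" p v] by (simp add: polyop_monom[OF T])
    also have "\<dots> = m" using mp by simp
    finally show ?thesis .
  qed
  ultimately show ?thesis using mp by blast
qed

lemma eigen_mod:
  assumes T: "lin T" and M: "subspace M" and U: "subspace U" and MU: "M \<subseteq> U"
    and TU: "\<forall>x\<in>U. T x \<in> U" and v: "v \<in> U" "v \<notin> M"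
  shows "\<exists>w\<in>U. w \<notin> M \<and> (\<exists>c. T w - c *s w \<in> M)"
  using exists_annih[OF T M, of v] descent[OF T M U MU TU v] by blast

lemma br_lin: "lin (br m)"
  by (simp add: lin_def br_add_r br_scale_r)

lemma common_eigen:
  assumes M: "subspace M" and ab: "\<forall>x\<in>M. \<forall>y\<in>M. br x y = 0"
    and U: "subspace U" and MU: "M \<subset> U" and inv: "\<forall>m\<in>M. \<forall>u\<in>U. br m u \<in> U"
  shows "\<exists>w\<in>U. w \<notin> M \<and> (\<forall>m\<in>M. \<exists>c. br m w - c *s w \<in> M)"
  using U MU inv
proof (induction "dim U" arbitrary: U rule: less_induct)
  case less
  show ?case
  proof (cases "\<forall>m\<in>M. \<exists>c. \<forall>u\<in>U. br m u - c *s u \<in> M")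
    case True
    obtain w where "w \<in> U" "w \<notin> M" using less.prems by blast
    then show ?thesis using True by blast
  next
    case False
    then obtain m where m: "m \<in> M" and nm: "\<forall>c. \<exists>u\<in>U. br m u - c *s u \<notin> M" by blast
    obtain v where v: "v \<in> U" "v \<notin> M" using less.prems by blast
    have TU: "\<forall>x\<in>U. br m x \<in> U" using less.prems m by blast
    obtain w c where w: "w \<in> U" "w \<notin> M" "br m w - c *s w \<in> M"
      using eigen_mod[OF br_lin M less.prems(1) _ TU v] less.prems by blast
    define U' where "U' = {u\<in>U. br m u - c *s u \<in> M}"
    have sU': "subspace U'"
    proof (rule subspaceI)
      show "0 \<in> U'" using less.prems(1) M by (simp add: U'_def subspace_0)
    next
      fix x y assume "x \<in> U'" "y \<in> U'"
      moreover have "br m (x + y) - c *s (x + y) = (br m x - c *s x) + (br m y - c *s y)"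
        by (simp add: br_add_r scale_right_distrib algebra_simps)
      ultimately show "x + y \<in> U'" using less.prems(1) M
        by (auto simp: U'_def subspace_add)
    next
      fix d x assume "x \<in> U'"
      moreover have "br m (d *s x) - c *s (d *s x) = d *s (br m x - c *s x)"
        by (simp add: br_scale_r scale_right_diff_distrib mult.commute)
      ultimately show "d *s x \<in> U'" using less.prems(1) M
        by (auto simp: U'_def subspace_scale)
    qed
    have MU': "M \<subseteq> U'"
    proof
      fix x assume x: "x \<in> M"
      have "br m x - c *s x = - (c *s x)" using ab m x by simp
      then show "x \<in> U'" using x less.prems(2) M
        by (auto simp: U'_def subspace_neg subspace_scale)
    qed
    have "w \<in> U'" using w by (simp add: U'_def)
    then have MU'': "M \<subset> U'" using MU' w by blast
    obtain u where u: "u \<in> U" "br m u - c *s u \<notin> M" using nm by blast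
    have "U' \<subset> U" using u by (auto simp: U'_def)
    then have "dim U' < dim U"
      using dim_psubset[of U' U] sU' less.prems(1) by (metis span_eq_iff)
    moreover have inv': "\<forall>m'\<in>M. \<forall>u\<in>U'. br m' u \<in> U'"
    proof (intro ballI)
      fix m' u assume m': "m' \<in> M" and u: "u \<in> U'"
      have "br m (br m' u) - c *s br m' u = br m' (br m u - c *s u)"
        using br_deriv[of m m' u] ab m m' by (simp add: br_diff_r br_scale_r)
      also have "\<dots> = 0" using ab m' u by (simp add: U'_def)
      finally show "br m' u \<in> U'" using less.prems(3) m' u M
        by (simp add: U'_def subspace_0)
    qed
    ultimately obtain w' where "w' \<in> U'" "w' \<notin> M" "\<forall>m\<in>M. \<exists>c. br m w' - c *s w' \<in> M"
      using less.hyps[OF _ sU' MU''] by blast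
    then show ?thesis by (auto simp: U'_def)
  qed
qed


end

context lie_fd begin
lemma decomp:
  assumes "subspace H" "span (insert z H) = UNIV"
  shows "\<exists>k. t - k *s z \<in> H"
proof -
  have sH: "span H = H" using assms(1) by (rule span_eq_iff[THEN iffD2])
  have "t \<in> span (insert z H)" using assms(2) by simp
  then obtain k where "t - k *s z \<in> span H" using span_breakdown_eq by blast
  then show ?thesis using sH by auto
qed

lemma hyper_max:
  assumes H: "subspace H" and sp: "span (insert z H) = UNIV" and N: "subspace N"
    and HN: "H \<subseteq> N" and nHN: "\<not> N \<subseteq> H"
  shows "N = UNIV"
proof -
  obtain n where n: "n \<in> N" "n \<notin> H" using nHN by blast
  obtain k where k: "n - k *s z \<in> H" using decomp[OF H sp] by blast
  have k0: "k \<noteq> 0" using k n by auto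
  have "n - (n - k *s z) \<in> N" using n k HN subspace_diff[OF N, of n "n - k *s z"] by auto
  then have "k *s z \<in> N" by simp
  then have "inverse k *s (k *s z) \<in> N" by (rule subspace_scale[OF N])
  then have z: "z \<in> N" using k0 by simp
  have "t \<in> N" for t
  proof -
    obtain kt where "t - kt *s z \<in> H" using decomp[OF H sp] by blast
    then have "t - kt *s z \<in> N" using HN by auto
    moreover have "kt *s z \<in> N" by (rule subspace_scale[OF N z])
    ultimately have "(t - kt *s z) + kt *s z \<in> N" by (rule subspace_add[OF N])
    then show ?thesis by simp
  qed
  then show ?thesis by auto
qed

lemma max_of_hyper:
  assumes "lie_subalgebra scale br H" "z \<notin> H" "span (insert z H) = UNIV"
  shows "maximal_subalgebra scale br H"
  unfolding maximal_subalgebra_def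
proof (intro conjI allI impI)
  show "lie_subalgebra scale br H" by (rule assms(1))
  show "H \<noteq> UNIV" using assms(2) by auto
  fix N assume N: "lie_subalgebra scale br N \<and> H \<subseteq> N"
  have sH: "subspace H" using assms(1) by (simp add: lie_subalgebra_def)
  have sN: "subspace N" using N by (simp add: lie_subalgebra_def)
  show "N = H \<or> N = UNIV"
  proof (cases "N \<subseteq> H")
    case True then show ?thesis using N by blast
  next
    case False then show ?thesis using hyper_max[OF sH assms(3) sN] N by blast
  qed
qed

lemma cs_of_ab:
  assumes "\<forall>x\<in>derived_algebra scale br. \<forall>y\<in>derived_algebra scale br. br x y = 0"
  shows "completely_solvable scale br"
proof -
  let ?D = "derived_algebra scale br"
  have "0 \<in> ?D" unfolding derived_algebra_def by (rule span_zero)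
  have "{br x y |x y. x \<in> ?D \<and> y \<in> ?D} = {0}"
  proof
    show "{br x y |x y. x \<in> ?D \<and> y \<in> ?D} \<subseteq> {0}" using assms by blast
    have "br 0 0 \<in> {br x y |x y. x \<in> ?D \<and> y \<in> ?D}" using \<open>0 \<in> ?D\<close> by blast
    then show "{0} \<subseteq> {br x y |x y. x \<in> ?D \<and> y \<in> ?D}" by simp
  qed
  then have "lower_central scale br ?D (Suc 0) = {0}" by simp
  then show ?thesis unfolding completely_solvable_def nilpotent_subalg_def by blast
qed

lemma codim1:
  assumes "subspace I" "dim I + 1 = dim (UNIV :: 'v set)" "x \<notin> I"
  shows "span (insert x I) = UNIV"
proof -
  have sI: "span I = I" using assms(1) by (rule span_eq_iff[THEN iffD2])
  have nx: "x \<notin> span I" unfolding sI by (rule assms(3))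
  have "dim (insert x I) = dim I + 1" using nx by (simp add: dim_insert)
  then have "dim (insert x I) = dimension" using assms by (simp add: dimension_def)
  then show ?thesis using dim_eq_full by blast
qed

lemma dim1:
  assumes "subspace D" "dim D = 1"
  shows "\<exists>y. y \<noteq> 0 \<and> D = span {y}"
proof -
  obtain B where B: "B \<subseteq> D" "independent B" "D \<subseteq> span B" "card B = dim D"
    using basis_exists[of D] by blast
  then obtain y where "B = {y}" using assms by (metis card_1_singletonE)
  moreover have "span B \<subseteq> D" using B assms by (simp add: span_minimal)
  moreover have "y \<noteq> 0" using B(2) \<open>B = {y}\<close> dependent_single by blast
  ultimately show ?thesis using B by blast
qed

lemma case_i:
  assumes I: "lie_ideal scale br I" and ab: "abelian_set br I"
    and d: "dim I + 1 = dim (UNIV::'v set)"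
  shows "maximal_subalgebra scale br I" and "completely_solvable scale br"
proof -
  have sI: "subspace I" and idl: "\<forall>x. \<forall>y\<in>I. br x y \<in> I"
    using I by (auto simp: lie_ideal_def)
  have abI: "\<forall>x\<in>I. \<forall>y\<in>I. br x y = 0" using ab by (simp add: abelian_set_def)
  have "I \<noteq> UNIV" using d by auto
  then obtain x where x: "x \<notin> I" by blast
  have sp: "span (insert x I) = UNIV" by (rule codim1[OF sI d x])
  have "lie_subalgebra scale br I" using sI idl by (simp add: lie_subalgebra_def)
  then show "maximal_subalgebra scale br I" by (rule max_of_hyper[OF _ x sp])
  have brI: "br a b \<in> I" for a b
  proof -
    obtain ka where ka: "a - ka *s x \<in> I" using decomp[OF sI sp] by blast
    obtain kb where kb: "b - kb *s x \<in> I" using decomp[OF sI sp] by blast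
    define a' where "a' = a - ka *s x"
    define b' where "b' = b - kb *s x"
    have "br a b = br (ka *s x + a') (kb *s x + b')" by (simp add: a'_def b'_def)
    also have "\<dots> = ka *s br x b' + kb *s br a' x + br a' b'" by (rule br_expand)
    finally have e: "br a b = ka *s br x b' + kb *s br a' x + br a' b'" .
    have h1: "br x b' \<in> I" using idl kb b'_def by blast
    have "br x a' \<in> I" using idl ka a'_def by blast
    then have h2: "br a' x \<in> I" using br_anti[of a' x] subspace_neg[OF sI] by metis
    have h3: "br a' b' \<in> I" using idl kb b'_def by blast
    show ?thesis unfolding e
      by (intro subspace_add[OF sI] subspace_scale[OF sI] h1 h2 h3)
  qed
  have "derived_algebra scale br \<subseteq> I"
    unfolding derived_algebra_def by (rule span_minimal) (use brI sI in auto)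
  then show "completely_solvable scale br" using abI by (intro cs_of_ab) blast
qed

lemma deriv_sub: "subspace (derived_algebra scale br)"
  unfolding derived_algebra_def by simp

lemma br_in_D: "br a b \<in> derived_algebra scale br"
  unfolding derived_algebra_def by (rule span_base) blast

lemma case_ii_cs:
  assumes "dim (derived_algebra scale br) = 1"
  shows "completely_solvable scale br"
proof -
  obtain y where y: "y \<noteq> 0" "derived_algebra scale br = span {y}"
    using dim1[OF deriv_sub assms] by blast
  show ?thesis
  proof (rule cs_of_ab, intro ballI)
    fix a b assume "a \<in> derived_algebra scale br" "b \<in> derived_algebra scale br"
    then obtain k l where "a = k *s y" "b = l *s y" using y by (auto simp: span_singleton)
    then show "br a b = 0" by (simp add: br_scale_l br_scale_r br_alt)
  qed
qed

lemma in_span_insertI: "t - k *s z \<in> H \<Longrightarrow> t \<in> span (insert z H)"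
  using span_breakdown_eq[of t z H] span_superset[of H] by blast

lemma case_ii_max:
  assumes d: "dim (derived_algebra scale br) = 1" and ph: "frattini_ideal scale br = {0}"
  shows "\<exists>M. maximal_subalgebra scale br M \<and> abelian_set br M"
proof -
  let ?D = "derived_algebra scale br"
  obtain y where y: "y \<noteq> 0" "?D = span {y}"
    using dim1[OF deriv_sub d] by blast
  have inD: "\<exists>c. br a b = c *s y" for a b
    using br_in_D[of a b] y(2) by (auto simp: span_singleton)
  have yD: "y \<in> ?D" using y(2) by (simp add: span_base)
  show ?thesis
  proof (cases "\<forall>a. br a y = 0")
    case True
    have yM: "y \<in> M" if M: "maximal_subalgebra scale br M" for M
    proof (rule ccontr)
      assume yn: "y \<notin> M"
      have sM: "subspace M" and clM: "\<forall>a\<in>M. \<forall>b\<in>M. br a b \<in> M"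
        using M by (auto simp: maximal_subalgebra_def lie_subalgebra_def)
      have spM: "span M = M" using sM by (rule span_eq_iff[THEN iffD2])
      let ?N = "span (insert y M)"
      have brN: "br a b \<in> M" if aN: "a \<in> ?N" and bN: "b \<in> ?N" for a b
      proof -
        obtain ka where ka: "a - ka *s y \<in> M" using aN span_breakdown_eq[of a y M] unfolding spM by blast
        obtain kb where kb: "b - kb *s y \<in> M" using bN span_breakdown_eq[of b y M] unfolding spM by blast
        define a' where "a' = a - ka *s y"
        define b' where "b' = b - kb *s y"
        have "br a b = br (ka *s y + a') (kb *s y + b')" by (simp add: a'_def b'_def)
        also have "\<dots> = ka *s br y b' + kb *s br a' y + br a' b'" by (rule br_expand)
        also have "\<dots> = br a' b'" using True br_anti[of y b'] by simp
        finally show ?thesis using clM ka kb a'_def b'_def by simp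
      qed
      have "lie_subalgebra scale br ?N"
        unfolding lie_subalgebra_def using brN span_superset[of "insert y M"] by (simp add: subset_eq)
      moreover have "M \<subseteq> ?N" using span_superset[of "insert y M"] by auto
      ultimately have "?N = M \<or> ?N = UNIV" using M unfolding maximal_subalgebra_def by blast
      moreover have "y \<in> ?N" by (simp add: span_base)
      ultimately have "?N = UNIV" using yn by auto
      then have "\<forall>a b. br a b \<in> M" using brN by auto
      then have "?D \<subseteq> M" unfolding derived_algebra_def by (intro span_minimal sM) auto
      then show False using yD yn by auto
    qed
    let ?I = "span {y}"
    have "lie_ideal scale br ?I"
      unfolding lie_ideal_def
    proof (intro conjI allI ballI)
      show "subspace ?I" by simp
      fix x z assume "z \<in> ?I"
      then obtain k where "z = k *s y" by (auto simp: span_singleton)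
      then show "br x z \<in> ?I" using True by (simp add: br_scale_r span_zero)
    qed
    moreover have "?I \<subseteq> \<Inter>{M. maximal_subalgebra scale br M}"
    proof
      fix z assume z: "z \<in> ?I"
      show "z \<in> \<Inter>{M. maximal_subalgebra scale br M}"
      proof
        fix M assume M: "M \<in> {M. maximal_subalgebra scale br M}"
        then have sM: "subspace M" by (auto simp: maximal_subalgebra_def lie_subalgebra_def)
        have "?I \<subseteq> M" using yM M by (intro span_minimal sM) auto
        then show "z \<in> M" using z by auto
      qed
    qed
    ultimately have "?I \<subseteq> \<Union>{I. lie_ideal scale br I \<and> I \<subseteq> \<Inter>{M. maximal_subalgebra scale br M}}"
      by blast
    then have "y \<in> frattini_ideal scale br"
      unfolding frattini_ideal_def using span_base[of y "{y}"] by (meson span_base singletonI subsetD)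
    then show ?thesis using ph y(1) by simp
  next
    case False
    then obtain x0 where x0: "br x0 y \<noteq> 0" by blast
    obtain c where c: "br x0 y = c *s y" using inD by blast
    have c0: "c \<noteq> 0" using c x0 by auto
    define x1 where "x1 = inverse c *s x0"
    have x1y: "br x1 y = y" using c c0 by (simp add: x1_def br_scale_l)
    define M where "M = {z. br x1 z = 0}"
    have sM: "subspace M"
      by (rule subspaceI) (auto simp: M_def br_add_r br_scale_r)
    have abM: "br z1 z2 = 0" if "z1 \<in> M" "z2 \<in> M" for z1 z2
    proof -
      obtain a where a: "br z1 z2 = a *s y" using inD by blast
      have "br x1 (br z1 z2) = br (br x1 z1) z2 + br z1 (br x1 z2)" by (rule br_deriv)
      also have "\<dots> = 0" using that by (simp add: M_def)
      finally have "a *s y = 0" using a x1y by (simp add: br_scale_r)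
      then show ?thesis using a by simp
    qed
    have "lie_subalgebra scale br M"
      unfolding lie_subalgebra_def
    proof (intro conjI ballI)
      show "subspace M" by (rule sM)
      fix a b assume "a \<in> M" "b \<in> M"
      then have "br a b = 0" by (rule abM)
      then show "br a b \<in> M" by (simp add: M_def)
    qed
    moreover have yM: "y \<notin> M" using x1y y(1) by (simp add: M_def)
    moreover have "span (insert y M) = UNIV"
    proof -
      have "t \<in> span (insert y M)" for t
      proof -
        obtain f where f: "br x1 t = f *s y" using inD by blast
        have "br x1 (t - f *s y) = 0" using f x1y by (simp add: br_diff_r br_scale_r)
        then have "t - f *s y \<in> M" by (simp add: M_def)
        then show ?thesis by (rule in_span_insertI)
      qed
      then show ?thesis by auto
    qed
    ultimately have "maximal_subalgebra scale br M" by (rule max_of_hyper)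
    moreover have "abelian_set br M" using abM by (simp add: abelian_set_def)
    ultimately show ?thesis by blast
  qed
qed

lemma closed_fill:
  assumes M: "maximal_subalgebra scale br M" and x: "x \<notin> M"
    and cl: "\<And>a b. a \<in> span (insert x M) \<Longrightarrow> b \<in> span (insert x M) \<Longrightarrow> br a b \<in> span (insert x M)"
  shows "span (insert x M) = UNIV"
proof -
  let ?N = "span (insert x M)"
  have "lie_subalgebra scale br ?N" unfolding lie_subalgebra_def using cl by simp
  moreover have "M \<subseteq> ?N" using span_superset[of "insert x M"] by auto
  ultimately have "?N = M \<or> ?N = UNIV" using M unfolding maximal_subalgebra_def by blast
  moreover have "x \<in> ?N" by (simp add: span_base)
  ultimately show ?thesis using x by auto
qed

lemma case_forward:
  assumes M: "maximal_subalgebra scale br M" and ab: "abelian_set br M"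
  shows "(\<exists>I. lie_ideal scale br I \<and> abelian_set br I \<and> dim I + 1 = dim (UNIV :: 'v set))
     \<or> (dim (derived_algebra scale br) = 1 \<and> frattini_ideal scale br = {0})"
proof -
  have sM: "subspace M" and clM: "\<forall>a\<in>M. \<forall>b\<in>M. br a b \<in> M" and MU: "M \<noteq> UNIV"
    using M by (auto simp: maximal_subalgebra_def lie_subalgebra_def)
  have abM: "\<forall>x\<in>M. \<forall>y\<in>M. br x y = 0" using ab by (simp add: abelian_set_def)
  have spM: "span M = M" using sM by (rule span_eq_iff[THEN iffD2])
  show ?thesis
  proof (cases "\<forall>x. \<forall>y\<in>M. br x y \<in> M")
    case True
    obtain x where x: "x \<notin> M" using MU by blast
    have "span (insert x M) = UNIV"
    proof (rule closed_fill[OF M x])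
      fix a b assume aN: "a \<in> span (insert x M)" and bN: "b \<in> span (insert x M)"
      obtain ka where ka: "a - ka *s x \<in> M" using aN span_breakdown_eq[of a x M] unfolding spM by blast
      obtain kb where kb: "b - kb *s x \<in> M" using bN span_breakdown_eq[of b x M] unfolding spM by blast
      define a' where "a' = a - ka *s x"
      define b' where "b' = b - kb *s x"
      have "br a b = br (ka *s x + a') (kb *s x + b')" by (simp add: a'_def b'_def)
      also have "\<dots> = ka *s br x b' + kb *s br a' x + br a' b'" by (rule br_expand)
      finally have e: "br a b = ka *s br x b' + kb *s br a' x + br a' b'" .
      have h1: "br x b' \<in> M" using True kb b'_def by blast
      have "br x a' \<in> M" using True ka a'_def by blast
      then have h2: "br a' x \<in> M" using br_anti[of a' x] subspace_neg[OF sM] by metis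
      have h3: "br a' b' \<in> M" using True kb b'_def by blast
      have "br a b \<in> M" unfolding e
        by (intro subspace_add[OF sM] subspace_scale[OF sM] h1 h2 h3)
      then show "br a b \<in> span (insert x M)" using span_superset[of "insert x M"] by auto
    qed
    then have "dim (UNIV :: 'v set) = dim (insert x M)" by (metis dim_span)
    also have "\<dots> = dim M + 1" using x unfolding dim_insert spM by simp
    finally have "dim M + 1 = dim (UNIV :: 'v set)" by simp
    moreover have "lie_ideal scale br M" using sM True by (simp add: lie_ideal_def)
    ultimately show ?thesis using ab by blast
  next
    case False
    then obtain z y where y: "y \<in> M" and zy: "br z y \<notin> M" by blast
    obtain x where x: "x \<notin> M" and ev: "\<forall>m\<in>M. \<exists>c. br m x - c *s x \<in> M"
      using common_eigen[OF sM abM subspace_UNIV] MU by blast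
    have spx: "span (insert x M) = UNIV"
    proof (rule closed_fill[OF M x])
      fix a b assume aN: "a \<in> span (insert x M)" and bN: "b \<in> span (insert x M)"
      obtain ka where ka: "a - ka *s x \<in> M" using aN span_breakdown_eq[of a x M] unfolding spM by blast
      obtain kb where kb: "b - kb *s x \<in> M" using bN span_breakdown_eq[of b x M] unfolding spM by blast
      define a' where "a' = a - ka *s x"
      define b' where "b' = b - kb *s x"
      have "br a b = br (ka *s x + a') (kb *s x + b')" by (simp add: a'_def b'_def)
      also have "\<dots> = ka *s br x b' + kb *s br a' x + br a' b'" by (rule br_expand)
      finally have e: "br a b = ka *s br x b' + kb *s br a' x + br a' b'" .
      obtain ca where "br a' x - ca *s x \<in> M" using ev ka a'_def by blast
      then have h2: "br a' x \<in> span (insert x M)" by (rule in_span_insertI)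
      obtain cb where "br b' x - cb *s x \<in> M" using ev kb b'_def by blast
      then have "br b' x \<in> span (insert x M)" by (rule in_span_insertI)
      then have h1: "br x b' \<in> span (insert x M)" using br_anti[of x b'] span_neg by metis
      have h3: "br a' b' \<in> span (insert x M)" using abM ka kb a'_def b'_def span_zero by simp
      show "br a b \<in> span (insert x M)" unfolding e
        by (intro span_add span_scale h1 h2 h3)
    qed
    have dec: "\<exists>k. t - k *s x \<in> M" for t by (rule decomp[OF sM spx])
    have xy: "br x y \<notin> M"
    proof
      assume xyM: "br x y \<in> M"
      obtain kz where kz: "z - kz *s x \<in> M" using dec by blast
      define z' where "z' = z - kz *s x"
      have "br z y = br (kz *s x + z') y" by (simp add: z'_def)
      also have "\<dots> = kz *s br x y + br z' y" by (simp only: br_add_l br_scale_l)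
      also have "br z' y = 0" using abM kz y unfolding z'_def by blast
      also have "kz *s br x y + 0 = kz *s br x y" by simp
      finally show False using zy xyM subspace_scale[OF sM] by metis
    qed
    have yx: "br y x \<notin> M" using xy br_anti[of y x] subspace_neg[OF sM] by (metis minus_minus)
    obtain c0 where c0: "br y x - c0 *s x \<in> M" using ev y by blast
    have c00: "c0 \<noteq> 0" using c0 yx by auto
    define m0 where "m0 = inverse c0 *s y"
    have m0M: "m0 \<in> M" using y sM by (simp add: m0_def subspace_scale)
    define u where "u = br m0 x - x"
    have "u = inverse c0 *s (br y x - c0 *s x)"
      using c00 by (simp add: u_def m0_def br_scale_l scale_right_diff_distrib)
    then have uM: "u \<in> M" using c0 sM by (simp add: subspace_scale)
    define y0 where "y0 = br m0 x"
    have y0xu: "y0 = x + u" by (simp add: u_def y0_def)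
    have m0y0: "br m0 y0 = y0"
      using abM m0M uM by (simp add: y0xu br_add_r) (simp add: y0_def u_def)
    have y0M: "y0 \<notin> M"
    proof
      assume "y0 \<in> M"
      then have "y0 - u \<in> M" using uM sM by (simp add: subspace_diff)
      then show False using x y0xu by simp
    qed
    have y00: "y0 \<noteq> 0" using y0M sM subspace_0 by metis
    have ev0: "\<exists>c. br m y0 = c *s y0" if m: "m \<in> M" for m
    proof -
      obtain c where cv: "br m x - c *s x \<in> M" using ev m by blast
      define k where "k = m - c *s m0"
      have kM: "k \<in> M" using m m0M sM by (simp add: k_def subspace_diff subspace_scale)
      have "br k x = (br m x - c *s x) - c *s u"
        by (simp add: k_def br_diff_l br_scale_l u_def scale_right_diff_distrib)
      then have kx: "br k x \<in> M" using cv uM sM by (simp add: subspace_diff subspace_scale)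
      have "br k y0 = br (br k m0) x + br m0 (br k x)" unfolding y0_def by (rule br_deriv)
      also have "\<dots> = 0" using abM kM m0M kx by simp
      finally have ky: "br k y0 = 0" .
      have "m = k + c *s m0" by (simp add: k_def)
      then have "br m y0 = br k y0 + c *s br m0 y0" by (simp add: br_add_l br_scale_l)
      then show ?thesis using ky m0y0 by auto
    qed
    have dec0: "\<exists>k. t - k *s y0 \<in> M" for t
    proof -
      obtain k where "t - k *s x \<in> M" using dec by blast
      then have "(t - k *s x) - k *s u \<in> M" using uM sM by (simp add: subspace_diff subspace_scale)
      then have "t - k *s y0 \<in> M" by (simp add: y0xu scale_right_distrib algebra_simps)
      then show ?thesis by blast
    qed
    let ?D = "derived_algebra scale br"
    have brY: "br a b \<in> span {y0}" for a b
    proof -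
      obtain ka where ka: "a - ka *s y0 \<in> M" using dec0 by blast
      obtain kb where kb: "b - kb *s y0 \<in> M" using dec0 by blast
      define a' where "a' = a - ka *s y0"
      define b' where "b' = b - kb *s y0"
      have "br a b = br (ka *s y0 + a') (kb *s y0 + b')" by (simp add: a'_def b'_def)
      also have "\<dots> = ka *s br y0 b' + kb *s br a' y0 + br a' b'" by (rule br_expand)
      finally have e: "br a b = ka *s br y0 b' + kb *s br a' y0 + br a' b'" .
      obtain ca where ca: "br a' y0 = ca *s y0" using ev0 ka a'_def by blast
      obtain cb where cb: "br b' y0 = cb *s y0" using ev0 kb b'_def by blast
      have h1: "br y0 b' \<in> span {y0}" using cb br_anti[of y0 b']
        by (metis span_neg span_scale span_base singletonI)
      have h2: "br a' y0 \<in> span {y0}" using ca by (metis span_scale span_base singletonI)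
      have h3: "br a' b' \<in> span {y0}" using abM ka kb a'_def b'_def span_zero by simp
      show ?thesis unfolding e by (intro span_add span_scale h1 h2 h3)
    qed
    have DY: "?D = span {y0}"
    proof
      show "?D \<subseteq> span {y0}" unfolding derived_algebra_def
        by (rule span_minimal) (use brY in auto)
      have "y0 \<in> ?D" using br_in_D[of m0 y0] m0y0 by simp
      then show "span {y0} \<subseteq> ?D" by (intro span_minimal deriv_sub) auto
    qed
    then have dD: "dim ?D = 1" using y00 by simp
    have noI: "I \<subseteq> {0}" if I: "lie_ideal scale br I" "I \<subseteq> \<Inter>{M. maximal_subalgebra scale br M}" for I
    proof
      fix z assume zI: "z \<in> I"
      show "z \<in> {0}"
      proof (rule ccontr)
        assume "z \<notin> {0}"
        then have z0: "z \<noteq> 0" by simp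
        have zM: "z \<in> M" using I zI M by blast
        have "span {z} \<subseteq> M" using zM by (intro span_minimal sM) auto
        then have y0z: "y0 \<notin> span {z}" using y0M by auto
        have "y0 \<noteq> z" using y0M zM by auto
        then have ind: "independent {y0, z}"
          using y0z z0 by (simp add: independent_insert)
        define B where "B = extend_basis {y0, z}"
        have supB: "{y0, z} \<subseteq> B" unfolding B_def by (rule extend_basis_superset[OF ind])
        have indB: "independent B" using ind by (simp add: B_def independent_extend_basis)
        have spB: "span B = UNIV" using ind by (simp add: B_def)
        define H where "H = span (B - {z})"
        have zH: "z \<notin> H"
        proof
          assume "z \<in> H"
          then have "dependent B" unfolding dependent_def H_def using supB by blast
          then show False using indB by simp
        qed
        have y0H: "y0 \<in> H" unfolding H_def using supB \<open>y0 \<noteq> z\<close> by (intro span_base) auto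
        have "span {y0} \<subseteq> H" unfolding H_def using y0H H_def by (intro span_minimal) auto
        then have "lie_subalgebra scale br H"
          unfolding lie_subalgebra_def H_def using brY by auto
        moreover have "span (insert z H) = UNIV"
        proof -
          have "B \<subseteq> insert z H" unfolding H_def using span_superset[of "B - {z}"] by auto
          then have "span B \<subseteq> span (insert z H)" by (rule span_mono)
          then show ?thesis using spB by auto
        qed
        ultimately have "maximal_subalgebra scale br H" using zH by (intro max_of_hyper)
        then show False using I zI zH by blast
      qed
    qed
    have "frattini_ideal scale br = {0}"
    proof
      show "frattini_ideal scale br \<subseteq> {0}" unfolding frattini_ideal_def
        by (rule span_minimal) (use noI in auto)
      show "{0} \<subseteq> frattini_ideal scale br" unfolding frattini_ideal_def by (simp add: span_zero)
    qed
    with dD show ?thesis by blast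
  qed
qed


lemma main:
  "((\<exists>M. maximal_subalgebra scale br M \<and> abelian_set br M) \<longleftrightarrow>
          ((\<exists>I. lie_ideal scale br I \<and> abelian_set br I
                \<and> dim I + 1 = dim (UNIV :: 'v set))
           \<or> (dim (derived_algebra scale br) = 1 \<and> frattini_ideal scale br = {0})))
       \<and> (((\<exists>I. lie_ideal scale br I \<and> abelian_set br I
                \<and> dim I + 1 = dim (UNIV :: 'v set))
           \<or> (dim (derived_algebra scale br) = 1 \<and> frattini_ideal scale br = {0}))
          \<longrightarrow> completely_solvable scale br)"
  using case_forward case_i case_ii_max case_ii_cs by blast

end

theorem proposition3p2:
  fixes sc :: "'a::field \<Rightarrow> 'v::ab_group_add \<Rightarrow> 'v"
    and br :: "'v \<Rightarrow> 'v \<Rightarrow> 'v"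
  assumes "alg_closed_field TYPE('a)"
    and "lie_algebra sc br"
    and "fin_dim sc"
  shows "((\<exists>M. maximal_subalgebra sc br M \<and> abelian_set br M) \<longleftrightarrow>
          ((\<exists>I. lie_ideal sc br I \<and> abelian_set br I
                \<and> vector_space.dim sc I + 1 = vector_space.dim sc (UNIV :: 'v set))
           \<or> (vector_space.dim sc (derived_algebra sc br) = 1 \<and> frattini_ideal sc br = {0})))
       \<and> (((\<exists>I. lie_ideal sc br I \<and> abelian_set br I
                \<and> vector_space.dim sc I + 1 = vector_space.dim sc (UNIV :: 'v set))
           \<or> (vector_space.dim sc (derived_algebra sc br) = 1 \<and> frattini_ideal sc br = {0}))
          \<longrightarrow> completely_solvable sc br)"
proof -
  have vs: "vector_space sc" and l1: "\<And>x. Vector_Spaces.linear sc sc (br x)"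
    and l2: "\<And>y. Vector_Spaces.linear sc sc (\<lambda>x. br x y)"
    and alt: "\<And>x. br x x = 0"
    and jac: "\<And>x y z. br x (br y z) + br y (br z x) + br z (br x y) = 0"
    using assms(2) unfolding lie_algebra_def by auto
  interpret vector_space sc by (rule vs)
  obtain B0 where B0: "finite B0" "span B0 = UNIV" using assms(3) unfolding fin_dim_def by blast
  obtain B where B: "B \<subseteq> B0" "independent B" "B0 \<subseteq> span B"
    using maximal_independent_subset[of B0] by blast
  have "span B0 \<subseteq> span B" using B(3) by (metis span_mono span_span)
  then have spB: "span B = UNIV" using B0 by auto
  have fB: "finite B" using B B0 finite_subset by blast
  interpret lie_fd sc B br
  proof unfold_locales
    show "finite B" by (rule fB)
    show "independent B" by (rule B(2))
    show "span B = UNIV" by (rule spB)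
    fix x y z :: 'v and c :: 'a
    show "br x (y + z) = br x y + br x z" using l1[of x] unfolding Vector_Spaces.linear_iff by blast
    show "br x (sc c y) = sc c (br x y)" using l1[of x] unfolding Vector_Spaces.linear_iff by blast
    show "br (x + y) z = br x z + br y z" using l2[of z] unfolding Vector_Spaces.linear_iff by blast
    show "br (sc c x) y = sc c (br x y)" using l2[of y] unfolding Vector_Spaces.linear_iff by blast
    show "br x x = 0" by (rule alt)
    show "br x (br y z) + br y (br z x) + br z (br x y) = 0" by (rule jac)
    show "\<forall>p :: 'a poly. degree p > 0 \<longrightarrow> (\<exists>x. poly p x = 0)"
      using assms(1) unfolding alg_closed_field_def by blast
  qed
  show ?thesis by (rule main)
qed

end
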